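(* In the setting below, assume each $f_i$ is $L_i$-smooth and there is $x_*$ with $F(x_* )=\inf F\in\mathbb R$. If $\eta_k\le\frac1{2n\sqrt{\bar LL^*}}$ for all $k\in[K]$, then for any $k\in[K]$, any permutation $\sigma_k$ and any $z\in\mathbb R^d$, $$\frac1n\sum_{i=1}^n\Big(B_{f_{\sigma_k^i}}(x_{k+1},x_k^i)-B_{f_{\sigma_k^i}}(z,x_k^i)\Big)\le\bar L\|x_{k+1}-x_k\|^2+8\eta_k^2n^2\bar L^2B_f(z,x_* )+4\eta_k^2R_k,$$ where $R_k=\sum_{i=2}^n\frac{L_{\sigma_k^i}}{n}\Big\|\sum_{j=1}^{i-1}\nabla f_{\sigma_k^j}(x_* )\Big\|^2$.
   Context: Setting. Let $n,d\in\mathbb N$, let $f_1,\dots,f_n:\mathbb R^d\to\mathbb R$ be convex, $f=\frac1n\sum_{i=1}^nf_i$, let $\psi:\mathbb R^d\to\mathbb R\cup\{+\infty\}$ be proper, closed and convex, and $F=f+\psi$. $B_g(x,y)=g(x)-g(y)-\langle\nabla g(y),x-y\rangle$ is the Bregman divergence. Proximal shuffling gradient method: given $x_1\in\mathrm{dom}\,\psi$, a number of epochs $K\ge2$ and stepsizes $\eta_k>0$, for $k=1,\dots,K$: choose a permutation $\sigma_k=(\sigma_k^1,\dots,\sigma_k^n)$ of $[n]=\{1,\dots,n\}$; set $x_k^1=x_k$ and $x_k^{i+1}=x_k^i-\eta_k\nabla f_{\sigma_k^i}(x_k^i)$ for $i=1,\dots,n$; set $x_{k+1}=\arg\min_{x\in\mathbb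 R^d}\{n\psi(x)+\frac{1}{2\eta_k}\|x-x_k^{n+1}\|^2\}$. Smoothness: each $f_i$ is differentiable with $\|\nabla f_i(x)-\nabla f_i(y)\|\le L_i\|x-y\|$ for all $x,y$, $L_i>0$; $\bar L=\frac1n\sum_iL_i$, $L^*=\max_iL_i$. *)

theory Defs
  imports "HOL-Analysis.Analysis"
begin

definition bregman :: "('a::real_inner \<Rightarrow> real) \<Rightarrow> ('a \<Rightarrow> 'a) \<Rightarrow> 'a \<Rightarrow> 'a \<Rightarrow> real" where
  "bregman g dg x y = g x - g y - inner (dg y) (x - y)"

definition proper_closed_convex :: "('a::real_normed_vector \<Rightarrow> ereal) \<Rightarrow> bool" where
  "proper_closed_convex \<psi> \<longleftrightarrow>
     (\<forall>x. \<psi> x \<noteq> -\<infinity>) \<and> (\<exists>x. \<psi> x \<noteq> \<infinity>) \<and>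
     (\<forall>x y. \<forall>t::real. 0 \<le> t \<and> t \<le> 1 \<longrightarrow>
        \<psi> ((1 - t) *\<^sub>R x + t *\<^sub>R y) \<le> ereal (1 - t) * \<psi> x + ereal t * \<psi> y) \<and>
     (\<forall>c::real. closed {x. \<psi> x \<le> ereal c})"

end

theory Submission
  imports Defs
begin


lemma line_deriv:
  fixes g :: "'a::real_inner \<Rightarrow> real"
  assumes gd: "\<And>w. (g has_derivative (\<lambda>h. inner (dg w) h)) (at w)"
  shows "((\<lambda>t. g (u + t *\<^sub>R d)) has_field_derivative inner (dg (u + t *\<^sub>R d)) d) (at t within S)"
proof -
  have "((\<lambda>t. u + t *\<^sub>R d) has_derivative (\<lambda>s. s *\<^sub>R d)) (at t within S)"
    by (auto intro!: derivative_eq_intros)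
  from has_derivative_compose[OF this gd]
  have "((\<lambda>t. g (u + t *\<^sub>R d)) has_derivative (\<lambda>s. inner (dg (u + t *\<^sub>R d)) (s *\<^sub>R d))) (at t within S)" .
  then show ?thesis
    by (rule has_derivative_imp_has_field_derivative) (simp add: algebra_simps)
qed

lemma descent:
  fixes g :: "'a::real_inner \<Rightarrow> real"
  assumes gd: "\<And>w. (g has_derivative (\<lambda>h. inner (dg w) h)) (at w)"
    and sm: "\<And>a b. norm (dg a - dg b) \<le> L * norm (a - b)"
  shows "bregman g dg v u \<le> L / 2 * (norm (v - u))^2"
proof -
  define d where "d = v - u"
  define h where "h t = g (u + t *\<^sub>R d) - t * inner (dg u) d - L / 2 * t^2 * (norm d)^2" for t
  define h' where "h' t = inner (dg (u + t *\<^sub>R d)) d - inner (dg u) d - L * t * (norm d)^2" for t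
  have der: "(h has_field_derivative h' t) (at t)" for t
    unfolding h_def h'_def
    by (rule line_deriv[OF gd] derivative_eq_intros refl | simp add: power2_eq_square algebra_simps)+
  obtain t where t: "0 < t" "t < 1" "h 1 - h 0 = (1 - 0) * h' t"
    using MVT2[of 0 1 h h'] der by auto
  have "h' t = inner (dg (u + t *\<^sub>R d) - dg u) d - L * t * (norm d)^2"
    by (simp add: h'_def inner_diff_left)
  also have "\<dots> \<le> norm (dg (u + t *\<^sub>R d) - dg u) * norm d - L * t * (norm d)^2"
    using norm_cauchy_schwarz by simp
  also have "\<dots> \<le> L * norm (t *\<^sub>R d) * norm d - L * t * (norm d)^2"
    using sm[of "u + t *\<^sub>R d" u] by (simp add: mult_right_mono)
  also have "\<dots> = 0" using t by (simp add: power2_eq_square)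
  finally have "h 1 \<le> h 0" using t by simp
  then show ?thesis by (simp add: h_def d_def bregman_def)
qed

lemma grad_ineq:
  fixes g :: "'a::real_inner \<Rightarrow> real"
  assumes cv: "convex_on UNIV g"
    and gd: "\<And>w. (g has_derivative (\<lambda>h. inner (dg w) h)) (at w)"
  shows "bregman g dg v u \<ge> 0"
proof -
  define d where "d = v - u"
  define h where "h t = g (u + t *\<^sub>R d)" for t
  have hc: "convex_on UNIV h"
    unfolding convex_on_def
  proof (intro conjI ballI allI impI, simp)
    fix x y a b :: real assume ab: "a \<ge> 0" "b \<ge> 0" "a + b = 1"
    have "u + (a *\<^sub>R x + b *\<^sub>R y) *\<^sub>R d = a *\<^sub>R (u + x *\<^sub>R d) + b *\<^sub>R (u + y *\<^sub>R d)"
      using ab by (simp add: algebra_simps flip: scaleR_add_left)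
    moreover have "g (a *\<^sub>R (u + x *\<^sub>R d) + b *\<^sub>R (u + y *\<^sub>R d)) \<le> a * g (u + x *\<^sub>R d) + b * g (u + y *\<^sub>R d)"
      using cv ab unfolding convex_on_def by blast
    ultimately show "h (a *\<^sub>R x + b *\<^sub>R y) \<le> a * h x + b * h y" by (simp add: h_def)
  qed
  have "(h has_field_derivative inner (dg u) d) (at 0 within UNIV)"
    unfolding h_def using line_deriv[OF gd, where u=u and t=0 and d=d and S=UNIV] by (simp add: h_def)
  from convex_on_imp_above_tangent[OF hc _ _ _ this, of 1]
  have "h 1 - h 0 \<ge> inner (dg u) d" by simp
  then show ?thesis by (simp add: h_def d_def bregman_def)
qed

lemma cocoercive:
  fixes g :: "'a::real_inner \<Rightarrow> real"
  assumes cv: "convex_on UNIV g"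
    and gd: "\<And>w. (g has_derivative (\<lambda>h. inner (dg w) h)) (at w)"
    and sm: "\<And>a b. norm (dg a - dg b) \<le> L * norm (a - b)"
    and L: "L > 0"
  shows "(norm (dg v - dg u))^2 \<le> 2 * L * bregman g dg v u"
proof -
  define q where "q = dg v - dg u"
  define w where "w = v - (1 / L) *\<^sub>R q"
  have A: "bregman g dg w u \<ge> 0" by (rule grad_ineq[OF cv gd])
  have B: "bregman g dg w v \<le> L / 2 * (norm (w - v))^2" by (rule descent[OF gd sm])
  have nw: "(norm (w - v))^2 = (norm q)^2 / L^2"
    using L by (simp add: w_def power_divide)
  have "bregman g dg w u - bregman g dg w v = bregman g dg v u + inner (dg v - dg u) (w - v)"
    by (simp add: bregman_def inner_diff_left inner_diff_right algebra_simps)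
  also have "inner (dg v - dg u) (w - v) = - ((norm q)^2 / L)"
    by (simp add: w_def q_def power2_norm_eq_inner)
  finally have "0 \<le> bregman g dg v u - (norm q)^2 / L + L / 2 * ((norm q)^2 / L^2)"
    using A B unfolding nw by linarith
  also have "L / 2 * ((norm q)^2 / L^2) = (norm q)^2 / (2 * L)"
    using L by (simp add: power2_eq_square field_simps)
  finally have "(norm q)^2 / (2*L) \<le> bregman g dg v u" by (simp add: field_simps)
  then show ?thesis using L by (simp add: q_def field_simps)
qed
lemma cs_sum:
  fixes v :: "nat \<Rightarrow> 'a::real_normed_vector"
  assumes fin: "finite I" and JI: "J \<subseteq> I" and w: "\<And>j. j \<in> I \<Longrightarrow> w j > 0"
  shows "(norm (\<Sum>j\<in>J. v j))^2 \<le> (\<Sum>j\<in>I. w j) * (\<Sum>j\<in>I. (norm (v j))^2 / w j)"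
proof -
  have finJ: "finite J" using fin JI finite_subset by blast
  have wJ: "j \<in> J \<Longrightarrow> w j > 0" for j using w JI by auto
  have "norm (\<Sum>j\<in>J. v j) \<le> (\<Sum>j\<in>J. norm (v j))" by (rule norm_sum)
  also have "\<dots> = (\<Sum>j\<in>J. sqrt (w j) * (norm (v j) / sqrt (w j)))"
    by (rule sum.cong) (use wJ in force)+
  finally have 1: "(norm (\<Sum>j\<in>J. v j))^2 \<le> (\<Sum>j\<in>J. sqrt (w j) * (norm (v j) / sqrt (w j)))^2"
    by (rule power_mono) simp
  also have "\<dots> \<le> (\<Sum>j\<in>J. (sqrt (w j))^2) * (\<Sum>j\<in>J. (norm (v j) / sqrt (w j))^2)"
    by (rule Cauchy_Schwarz_ineq_sum)
  also have "\<dots> = (\<Sum>j\<in>J. w j) * (\<Sum>j\<in>J. (norm (v j))^2 / w j)"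
    using wJ by (simp add: power_divide less_imp_le)
  also have "\<dots> \<le> (\<Sum>j\<in>I. w j) * (\<Sum>j\<in>I. (norm (v j))^2 / w j)"
  proof (rule mult_mono)
    show "(\<Sum>j\<in>J. w j) \<le> (\<Sum>j\<in>I. w j)"
      by (rule sum_mono2[OF fin JI]) (use w in force)
    show "(\<Sum>j\<in>J. (norm (v j))^2 / w j) \<le> (\<Sum>j\<in>I. (norm (v j))^2 / w j)"
      by (rule sum_mono2[OF fin JI]) (use w in force)
    show "0 \<le> (\<Sum>j\<in>I. w j)" using w by (simp add: sum_nonneg less_imp_le)
    show "0 \<le> (\<Sum>j\<in>J. (norm (v j))^2 / w j)" using wJ by (simp add: sum_nonneg less_imp_le)
  qed
  finally show ?thesis .
qed

lemma norm3:
  fixes a b c :: "'a::real_normed_vector"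
  shows "(norm (a + b + c))^2 \<le> 2 * (norm a)^2 + 4 * (norm b)^2 + 4 * (norm c)^2"
proof -
  have sq: "(p + q)^2 \<le> 2 * p^2 + 2 * q^2" for p q :: real
    using sum_squares_ge_zero[of "p - q" 0] by (simp add: power2_eq_square algebra_simps)
  have "norm (a + (b + c)) \<le> norm a + norm (b + c)" by (rule norm_triangle_ineq)
  then have "(norm (a + (b + c)))^2 \<le> (norm a + norm (b + c))^2" by (rule power_mono) simp
  also have "\<dots> \<le> 2 * (norm a)^2 + 2 * (norm (b + c))^2" by (rule sq)
  also have "(norm (b + c))^2 \<le> (norm b + norm c)^2" by (rule power_mono[OF norm_triangle_ineq]) simp
  also have "\<dots> \<le> 2 * (norm b)^2 + 2 * (norm c)^2" by (rule sq)
  finally show ?thesis by (simp add: add.assoc)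
qed

lemma sum_aux:
  fixes l N B :: "nat \<Rightarrow> real"
  shows "(\<Sum>i\<in>I. l i * X + e^2 * l i * (2 * S * A + 4 * S * B' + 4 * N i) - B i)
    = (\<Sum>i\<in>I. l i) * X + 2 * e^2 * S * (\<Sum>i\<in>I. l i) * A + 4 * e^2 * S * (\<Sum>i\<in>I. l i) * B' + 4 * e^2 * (\<Sum>i\<in>I. l i * N i) - (\<Sum>i\<in>I. B i)"
proof -
  have "(\<Sum>i\<in>I. l i * X + e^2 * l i * (2 * S * A + 4 * S * B' + 4 * N i) - B i)
     = (\<Sum>i\<in>I. l i * (X + e^2 * (2 * S * A + 4 * S * B')) + (4 * e^2) * (l i * N i) - B i)"
    by (rule sum.cong) (simp_all add: algebra_simps)
  also have "\<dots> = (\<Sum>i\<in>I. l i) * (X + e^2 * (2 * S * A + 4 * S * B')) + (4 * e^2) * (\<Sum>i\<in>I. l i * N i) - (\<Sum>i\<in>I. B i)"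
    by (simp add: sum_subtractf sum.distrib sum_distrib_left sum_distrib_right)
  also have "\<dots> = (\<Sum>i\<in>I. l i) * X + 2 * e^2 * S * (\<Sum>i\<in>I. l i) * A + 4 * e^2 * S * (\<Sum>i\<in>I. l i) * B' + 4 * e^2 * (\<Sum>i\<in>I. l i * N i) - (\<Sum>i\<in>I. B i)"
    by (simp add: algebra_simps)
  finally show ?thesis .
qed

lemma fin_aux:
  fixes n SL X e Bs T :: real
  assumes "n > 0"
  shows "(1 / n) * (SL * X + 8 * e^2 * SL^2 * Bs + 4 * e^2 * T)
      = (SL / n) * X + 8 * e^2 * n^2 * (SL / n)^2 * (Bs / n) + 4 * e^2 * (T / n)"
  using assms by (simp add: field_simps power2_eq_square)

theorem mainTheorem7:
  fixes n K :: nat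
    and f :: "nat \<Rightarrow> 'a::euclidean_space \<Rightarrow> real"
    and gradf :: "nat \<Rightarrow> 'a \<Rightarrow> 'a"
    and L :: "nat \<Rightarrow> real"
    and \<psi> :: "'a \<Rightarrow> ereal"
    and x :: "nat \<Rightarrow> 'a"
    and y :: "nat \<Rightarrow> nat \<Rightarrow> 'a"
    and \<sigma> :: "nat \<Rightarrow> nat \<Rightarrow> nat"
    and \<eta> :: "nat \<Rightarrow> real"
    and xstar z :: 'a
    and k :: nat
  assumes n_pos: "n \<ge> 1"
    and K_ge: "K \<ge> 2"
    and f_convex: "\<And>i. i \<in> {1..n} \<Longrightarrow> convex_on UNIV (f i)"
    and f_grad: "\<And>i u. i \<in> {1..n} \<Longrightarrow> (f i has_derivative (\<lambda>h. inner (gradf i u) h)) (at u)"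
    and L_pos: "\<And>i. i \<in> {1..n} \<Longrightarrow> L i > 0"
    and f_smooth: "\<And>i u v. i \<in> {1..n} \<Longrightarrow> norm (gradf i u - gradf i v) \<le> L i * norm (u - v)"
    and psi: "proper_closed_convex \<psi>"
    and x1_dom: "\<psi> (x 1) \<noteq> \<infinity>"
    and eta_pos: "\<And>k. k \<in> {1..K} \<Longrightarrow> \<eta> k > 0"
    and sigma_perm: "\<And>k. k \<in> {1..K} \<Longrightarrow> \<sigma> k permutes {1..n}"
    and inner_start: "\<And>k. k \<in> {1..K} \<Longrightarrow> y k 1 = x k"
    and inner_step: "\<And>k i. k \<in> {1..K} \<Longrightarrow> i \<in> {1..n} \<Longrightarrow>
        y k (Suc i) = y k i - \<eta> k *\<^sub>R gradf (\<sigma> k i) (y k i)"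
    and prox_step: "\<And>k u. k \<in> {1..K} \<Longrightarrow>
        ereal (real n) * \<psi> (x (Suc k)) + ereal (norm (x (Suc k) - y k (Suc n))^2 / (2 * \<eta> k))
        \<le> ereal (real n) * \<psi> u + ereal (norm (u - y k (Suc n))^2 / (2 * \<eta> k))"
    and xstar_min: "ereal ((\<Sum>i=1..n. f i xstar) / real n) + \<psi> xstar
        = (INF u. ereal ((\<Sum>i=1..n. f i u) / real n) + \<psi> u)"
    and inf_finite: "(INF u. ereal ((\<Sum>i=1..n. f i u) / real n) + \<psi> u) \<noteq> \<infinity> \<and> (INF u. ereal ((\<Sum>i=1..n. f i u) / real n) + \<psi> u) \<noteq> -\<infinity>"
    and eta_bound: "\<And>k. k \<in> {1..K} \<Longrightarrow>
        \<eta> k \<le> 1 / (2 * real n * sqrt (((\<Sum>i=1..n. L i) / real n) * Max (L ` {1..n})))"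
    and k_range: "k \<in> {1..K}"
  shows "(1 / real n) * (\<Sum>i=1..n.
            bregman (f (\<sigma> k i)) (gradf (\<sigma> k i)) (x (Suc k)) (y k i)
          - bregman (f (\<sigma> k i)) (gradf (\<sigma> k i)) z (y k i))
      \<le> ((\<Sum>i=1..n. L i) / real n) * (norm (x (Suc k) - x k))^2
        + 8 * (\<eta> k)^2 * (real n)^2 * ((\<Sum>i=1..n. L i) / real n)^2
            * bregman (\<lambda>u. (\<Sum>i=1..n. f i u) / real n) (\<lambda>u. (1 / real n) *\<^sub>R (\<Sum>i=1..n. gradf i u)) z xstar
        + 4 * (\<eta> k)^2 * (\<Sum>i=2..n. L (\<sigma> k i) / real n * (norm (\<Sum>j=1..i-1. gradf (\<sigma> k j) xstar))^2)"
proof -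
  define s where "s = \<sigma> k"
  define p where "p = y k"
  define e where "e = \<eta> k"
  define SL where "SL = (\<Sum>i=1..n. L i)"
  define x' where "x' = x (Suc k)"
  define a where "a j = gradf (s j) (p j) - gradf (s j) z" for j
  define b where "b j = gradf (s j) z - gradf (s j) xstar" for j
  define c where "c j = gradf (s j) xstar" for j
  define B2 where "B2 j = bregman (f (s j)) (gradf (s j)) z (p j)" for j
  define Bs where "Bs = (\<Sum>i=1..n. bregman (f i) (gradf i) z xstar)"
  define SA where "SA = (\<Sum>j=1..n. (norm (a j))^2 / L (s j))"
  define SB where "SB = (\<Sum>j=1..n. (norm (b j))^2 / L (s j))"
  define LC where "LC = (\<Sum>i=1..n. L (s i) * (norm (\<Sum>j=1..<i. c j))^2)"
  have perm: "s permutes {1..n}" using sigma_perm k_range by (simp add: s_def)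
  have sin: "j \<in> {1..n} \<Longrightarrow> s j \<in> {1..n}" for j by (rule iffD2[OF permutes_in_image[OF perm]])
  have Ls: "j \<in> {1..n} \<Longrightarrow> L (s j) > 0" for j by (rule L_pos[OF sin])
  have ep: "e > 0" using eta_pos k_range by (simp add: e_def)
  have npos: "real n > 0" using n_pos by simp
  have sumLs: "(\<Sum>j=1..n. L (s j)) = SL"
    unfolding SL_def using sum.permute[OF perm, of L] by simp
  have SLpos: "SL > 0" unfolding SL_def using L_pos n_pos by (intro sum_pos) auto
  have pform: "\<forall>i. 1 \<le> i \<longrightarrow> i \<le> Suc n \<longrightarrow> x k - p i = e *\<^sub>R (\<Sum>j=1..<i. gradf (s j) (p j))" 
  proof (intro allI)
    fix i show "1 \<le> i \<longrightarrow> i \<le> Suc n \<longrightarrow> x k - p i = e *\<^sub>R (\<Sum>j=1..<i. gradf (s j) (p j))"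
    proof (induction i)
      case 0 then show ?case by simp
    next
      case (Suc i)
      show ?case
      proof (cases "i = 0")
        case True then show ?thesis using inner_start k_range by (simp add: p_def)
      next
        case False
        show ?thesis
        proof (intro impI)
          assume "Suc i \<le> Suc n"
          then have ii: "i \<in> {1..n}" using False by simp
          have "p (Suc i) = p i - e *\<^sub>R gradf (s i) (p i)"
            using inner_step[OF k_range ii] by (simp add: p_def e_def s_def)
          moreover have "x k - p i = e *\<^sub>R (\<Sum>j=1..<i. gradf (s j) (p j))"
            using Suc.IH ii by simp
          moreover have "(\<Sum>j=1..<Suc i. gradf (s j) (p j)) = (\<Sum>j=1..<i. gradf (s j) (p j)) + gradf (s i) (p i)"
            using ii by simp
          ultimately show "x k - p (Suc i) = e *\<^sub>R (\<Sum>j=1..<Suc i. gradf (s j) (p j))"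
            by (simp add: algebra_simps)
        qed
      qed
    qed
  qed
  have B2nn: "j \<in> {1..n} \<Longrightarrow> (norm (a j))^2 / L (s j) \<le> 2 * B2 j" for j
  proof -
    assume j: "j \<in> {1..n}"
    have "(norm (gradf (s j) z - gradf (s j) (p j)))^2 \<le> 2 * L (s j) * B2 j"
      unfolding B2_def
      by (rule cocoercive[OF f_convex[OF sin[OF j]] f_grad[OF sin[OF j]] f_smooth[OF sin[OF j]] Ls[OF j]])
    then have "(norm (a j))^2 \<le> 2 * L (s j) * B2 j" by (simp add: a_def norm_minus_commute)
    then show ?thesis using Ls[OF j] by (simp add: divide_simps mult.commute mult.left_commute)
  qed
  have B2pos: "j \<in> {1..n} \<Longrightarrow> 0 \<le> B2 j" for j
    unfolding B2_def by (rule grad_ineq[OF f_convex[OF sin] f_grad[OF sin]])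
  have SAle: "SA \<le> 2 * (\<Sum>j=1..n. B2 j)"
    unfolding SA_def sum_distrib_left by (rule sum_mono) (rule B2nn)
  have SBle: "SB \<le> 2 * Bs"
  proof -
    have "SB \<le> (\<Sum>j=1..n. 2 * bregman (f (s j)) (gradf (s j)) z xstar)"
      unfolding SB_def
    proof (rule sum_mono)
      fix j assume j: "j \<in> {1..n}"
      have "(norm (b j))^2 \<le> 2 * L (s j) * bregman (f (s j)) (gradf (s j)) z xstar"
        unfolding b_def
        by (rule cocoercive[OF f_convex[OF sin[OF j]] f_grad[OF sin[OF j]] f_smooth[OF sin[OF j]] Ls[OF j]])
      then show "(norm (b j))^2 / L (s j) \<le> 2 * bregman (f (s j)) (gradf (s j)) z xstar"
        using Ls[OF j] by (simp add: divide_simps mult.commute mult.left_commute)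
    qed
    also have "\<dots> = 2 * Bs"
      unfolding Bs_def sum_distrib_left[symmetric]
      using sum.permute[OF perm, of "\<lambda>i. bregman (f i) (gradf i) z xstar"] by simp
    finally show ?thesis .
  qed
  have per: "bregman (f (s i)) (gradf (s i)) x' (p i)
      \<le> L (s i) * (norm (x' - x k))^2 + e^2 * L (s i) * (2 * SL * SA + 4 * SL * SB + 4 * (norm (\<Sum>j=1..<i. c j))^2)"
    if i: "i \<in> {1..n}" for i
  proof -
    have d1: "bregman (f (s i)) (gradf (s i)) x' (p i) \<le> L (s i) / 2 * (norm (x' - p i))^2"
      by (rule descent[OF f_grad[OF sin[OF i]] f_smooth[OF sin[OF i]]])
    have sq: "(norm (u + w))^2 \<le> 2 * (norm u)^2 + 2 * (norm w)^2" for u w :: 'a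
    proof -
      have "(norm (u + w))^2 \<le> (norm u + norm w)^2" by (rule power_mono[OF norm_triangle_ineq]) simp
      also have "\<dots> \<le> 2 * (norm u)^2 + 2 * (norm w)^2"
        using sum_squares_ge_zero[of "norm u - norm w" 0] by (simp add: power2_eq_square algebra_simps)
      finally show ?thesis .
    qed
    have "(norm (x' - p i))^2 \<le> 2 * (norm (x' - x k))^2 + 2 * (norm (x k - p i))^2"
      using sq[of "x' - x k" "x k - p i"] by simp
    have xp: "x k - p i = e *\<^sub>R ((\<Sum>j=1..<i. a j) + (\<Sum>j=1..<i. b j) + (\<Sum>j=1..<i. c j))"
      using pform i by (simp add: a_def b_def c_def sum.distrib[symmetric])
    have "(norm (x k - p i))^2 = e^2 * (norm ((\<Sum>j=1..<i. a j) + (\<Sum>j=1..<i. b j) + (\<Sum>j=1..<i. c j)))^2"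
      unfolding xp using ep by (simp add: power_mult_distrib)
    also have "\<dots> \<le> e^2 * (2 * (norm (\<Sum>j=1..<i. a j))^2 + 4 * (norm (\<Sum>j=1..<i. b j))^2 + 4 * (norm (\<Sum>j=1..<i. c j))^2)"
      by (rule mult_left_mono[OF norm3]) simp
    also have "\<dots> \<le> e^2 * (2 * (SL * SA) + 4 * (SL * SB) + 4 * (norm (\<Sum>j=1..<i. c j))^2)"
    proof -
      have "(norm (\<Sum>j=1..<i. a j))^2 \<le> SL * SA"
        unfolding SA_def sumLs[symmetric] by (rule cs_sum) (use i Ls in auto)
      moreover have "(norm (\<Sum>j=1..<i. b j))^2 \<le> SL * SB"
        unfolding SB_def sumLs[symmetric] by (rule cs_sum) (use i Ls in auto)
      ultimately show ?thesis by (intro mult_left_mono) auto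
    qed
    finally have "(norm (x k - p i))^2 \<le> e^2 * (2 * (SL * SA) + 4 * (SL * SB) + 4 * (norm (\<Sum>j=1..<i. c j))^2)" .
    with \<open>(norm (x' - p i))^2 \<le> _\<close> have "L (s i) / 2 * (norm (x' - p i))^2 \<le> L (s i) / 2 * (2 * (norm (x' - x k))^2 + 2 * (e^2 * (2 * (SL * SA) + 4 * (SL * SB) + 4 * (norm (\<Sum>j=1..<i. c j))^2)))"
      using Ls[OF i] by (intro mult_left_mono) auto
    with d1 show ?thesis by (simp add: algebra_simps)
  qed
  define Lb where "Lb = SL / real n"
  define Lm where "Lm = Max (L ` {1..n})"
  have Lbpos: "Lb > 0" using SLpos npos by (simp add: Lb_def)
  have LmLb: "Lb \<le> Lm"
  proof -
    have "SL \<le> (\<Sum>i=1..n. Lm)" unfolding SL_def Lm_def by (rule sum_mono) simp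
    then show ?thesis using npos by (simp add: Lb_def field_simps)
  qed
  have estep: "4 * e^2 * SL^2 \<le> 1"
  proof -
    have "e \<le> 1 / (2 * real n * sqrt (Lb * Lm))"
      using eta_bound[OF k_range] by (simp add: e_def Lb_def SL_def Lm_def)
    moreover have "Lb \<le> sqrt (Lb * Lm)"
      by (rule real_le_rsqrt) (use LmLb Lbpos in \<open>simp add: power2_eq_square mult_left_mono\<close>)
    ultimately have "e * (2 * real n * Lb) \<le> 1"
    proof -
      assume e1: "e \<le> 1 / (2 * real n * sqrt (Lb * Lm))" and sq: "Lb \<le> sqrt (Lb * Lm)"
      have D: "2 * real n * sqrt (Lb * Lm) > 0" using npos Lbpos LmLb by (intro mult_pos_pos) auto
      have "e * (2 * real n * sqrt (Lb * Lm)) \<le> 1" using e1 D by (simp add: le_divide_eq)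
      moreover have "e * (2 * real n * Lb) \<le> e * (2 * real n * sqrt (Lb * Lm))"
        using ep npos sq by (intro mult_left_mono) auto
      ultimately show ?thesis by linarith
    qed
    then have "2 * e * SL \<le> 1" using npos by (simp add: Lb_def)
    then have "(2 * e * SL)^2 \<le> 1^2" using ep SLpos by (intro power_mono) auto
    then show ?thesis by (simp add: power_mult_distrib)
  qed
  have "(\<Sum>i=1..n. bregman (f (s i)) (gradf (s i)) x' (p i) - B2 i)
      \<le> (\<Sum>i=1..n. L (s i) * (norm (x' - x k))^2 + e^2 * L (s i) * (2 * SL * SA + 4 * SL * SB + 4 * (norm (\<Sum>j=1..<i. c j))^2) - B2 i)"
    by (rule sum_mono) (use per in auto)
  also have "\<dots> = SL * (norm (x' - x k))^2 + 2 * e^2 * SL^2 * SA + 4 * e^2 * SL^2 * SB + 4 * e^2 * LC - (\<Sum>i=1..n. B2 i)"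
  proof -
    have "(\<Sum>i=1..n. L (s i) * (norm (x' - x k))^2 + e^2 * L (s i) * (2 * SL * SA + 4 * SL * SB + 4 * (norm (\<Sum>j=1..<i. c j))^2) - B2 i)
      = (\<Sum>i=1..n. L (s i)) * (norm (x' - x k))^2 + 2 * e^2 * SL * (\<Sum>i=1..n. L (s i)) * SA + 4 * e^2 * SL * (\<Sum>i=1..n. L (s i)) * SB + 4 * e^2 * (\<Sum>i=1..n. L (s i) * (norm (\<Sum>j=1..<i. c j))^2) - (\<Sum>i=1..n. B2 i)"
      by (rule sum_aux)
    also have "\<dots> = SL * (norm (x' - x k))^2 + 2 * e^2 * SL * SL * SA + 4 * e^2 * SL * SL * SB + 4 * e^2 * LC - (\<Sum>i=1..n. B2 i)"
      unfolding sumLs LC_def ..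
    also have "\<dots> = SL * (norm (x' - x k))^2 + 2 * e^2 * SL^2 * SA + 4 * e^2 * SL^2 * SB + 4 * e^2 * LC - (\<Sum>i=1..n. B2 i)"
      by (simp add: power2_eq_square)
    finally show ?thesis .
  qed
  also have "\<dots> \<le> SL * (norm (x' - x k))^2 + 8 * e^2 * SL^2 * Bs + 4 * e^2 * LC"
  proof -
    have P: "0 \<le> (\<Sum>i=1..n. B2 i)" by (rule sum_nonneg) (rule B2pos)
    have "2 * e^2 * SL^2 * SA \<le> 2 * e^2 * SL^2 * (2 * (\<Sum>i=1..n. B2 i))"
      using SAle by (intro mult_left_mono) auto
    moreover have "4 * e^2 * SL^2 * SB \<le> 4 * e^2 * SL^2 * (2 * Bs)"
      using SBle by (intro mult_left_mono) auto
    moreover have "4 * e^2 * SL^2 * (\<Sum>i=1..n. B2 i) \<le> (\<Sum>i=1..n. B2 i)"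
      using estep P mult_right_mono[OF estep P] by simp
    ultimately show ?thesis by (simp add: algebra_simps)
  qed
  finally have main: "(\<Sum>i=1..n. bregman (f (s i)) (gradf (s i)) x' (p i) - B2 i)
      \<le> SL * (norm (x' - x k))^2 + 8 * e^2 * SL^2 * Bs + 4 * e^2 * LC" .
  have Bf: "bregman (\<lambda>u. (\<Sum>i=1..n. f i u) / real n) (\<lambda>u. (1 / real n) *\<^sub>R (\<Sum>i=1..n. gradf i u)) z xstar = Bs / real n"
    by (simp add: bregman_def Bs_def inner_sum_left sum_subtractf diff_divide_distrib)
  have LCeq: "LC = (\<Sum>i=2..n. L (s i) * (norm (\<Sum>j=1..i-1. c j))^2)"
  proof -
    have "LC = L (s 1) * (norm (\<Sum>j=1..<1. c j))^2 + (\<Sum>i=Suc 1..n. L (s i) * (norm (\<Sum>j=1..<i. c j))^2)"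
      unfolding LC_def using n_pos by (simp add: sum.atLeast_Suc_atMost)
    also have "\<dots> = (\<Sum>i=2..n. L (s i) * (norm (\<Sum>j=1..i-1. c j))^2)"
    proof -
      have "(\<Sum>j=1..<i. c j) = (\<Sum>j=1..i-1. c j)" if "i \<in> {2..n}" for i
        using that by (intro sum.cong) auto
      then show ?thesis by (simp add: numeral_2_eq_2)
    qed
    finally show ?thesis .
  qed
  have goalL: "(1 / real n) * (\<Sum>i=1..n. bregman (f (s i)) (gradf (s i)) x' (p i) - bregman (f (s i)) (gradf (s i)) z (p i))
      \<le> (1 / real n) * (SL * (norm (x' - x k))^2 + 8 * e^2 * SL^2 * Bs + 4 * e^2 * LC)"
    using main npos by (intro mult_left_mono) (auto simp: B2_def)
  have LCn: "LC / real n = (\<Sum>i=2..n. L (s i) / real n * (norm (\<Sum>j=1..i-1. c j))^2)"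
    unfolding LCeq sum_divide_distrib by (rule sum.cong) auto
  have "(1 / real n) * (SL * (norm (x' - x k))^2 + 8 * e^2 * SL^2 * Bs + 4 * e^2 * LC)
      = (SL / real n) * (norm (x' - x k))^2 + 8 * e^2 * (real n)^2 * (SL / real n)^2 * (Bs / real n)
        + 4 * e^2 * (LC / real n)"
    by (rule fin_aux) (use npos in simp)
  with goalL have fin: "(1 / real n) * (\<Sum>i=1..n. bregman (f (s i)) (gradf (s i)) x' (p i) - bregman (f (s i)) (gradf (s i)) z (p i))
      \<le> (SL / real n) * (norm (x' - x k))^2 + 8 * e^2 * (real n)^2 * (SL / real n)^2
           * bregman (\<lambda>u. (\<Sum>i=1..n. f i u) / real n) (\<lambda>u. (1 / real n) *\<^sub>R (\<Sum>i=1..n. gradf i u)) z xstar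
        + 4 * e^2 * (\<Sum>i=2..n. L (s i) / real n * (norm (\<Sum>j=1..i-1. c j))^2)"
    unfolding Bf LCn by simp
  then show ?thesis unfolding c_def s_def p_def e_def x'_def SL_def .
qed

end
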